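(* Let $(X_t)_{t\in T}$ be a real stochastic process indexed by a set $T$, let $k_1\geq 2$ be an integer, and let $(T_k)_{0\leq k\leq k_1}$ be subsets of $T$ with $|T_k|\leq e^{2^{k+1}}$ for $0\leq k\leq k_1$ and $T_{k_1}=T$. Let $\pi_k\colon T\to T_k$, $0\leq k\leq k_1$, be maps with $\pi_{k_1}(t)=t$ for all $t\in T$. Then for every integer $1\leq k_0\leq k_1-1$ and every $p$ with $2^{k_0-1}\leq p\leq 2^{k_0}$, \[ \Big\|\sup_{t\in T}|X_t|\Big\|_p\leq 3e^3\Big(\sup_{t\in T}\sum_{k=k_0+1}^{k_1}\|X_{\pi_k(t)}-X_{\pi_{k-1}(t)}\|_{2^k}+\sup_{t\in T_{k_0}}\|X_t\|_p\Big). \]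
   Context: $\|Y\|_p:=(\mathbb{E}|Y|^p)^{1/p}$ for a real random variable $Y$; $|T_k|$ is the cardinality (so $T$ is finite). *)

theory Defs
  imports "HOL-Probability.Probability"
begin

definition lpnorm :: "'a measure \<Rightarrow> real \<Rightarrow> ('a \<Rightarrow> real) \<Rightarrow> ennreal" where
  "lpnorm M p Y =
     (let I = (\<integral>\<^sup>+ x. ennreal (\<bar>Y x\<bar> powr p) \<partial>M)
      in if I = \<infinity> then \<infinity> else ennreal (enn2real I powr (1 / p)))"

end

theory Submission
  imports Defs
begin


lemma powr_ge1_aux:
  fixes l p :: real
  assumes "0 < l" "l \<le> 1" "p \<ge> 1"
  shows "l powr (1 - p) \<ge> 1"
  using powr_mono'[of "1-p" 0 l] assms by auto

lemma convex_pow_split: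
  fixes u v l p :: real
  assumes "u \<ge> 0" "v \<ge> 0" "0 < l" "l < 1" "p \<ge> 1"
  shows "(u + v) powr p \<le> l powr (1 - p) * u powr p + (1 - l) powr (1 - p) * v powr p"
proof (cases "u = 0 \<or> v = 0")
  case True
  have a: "l powr (1 - p) \<ge> 1" "(1 - l) powr (1 - p) \<ge> 1" using assms by (auto intro!: powr_ge1_aux)
  have "u powr p \<ge> 0" "v powr p \<ge> 0" by auto
  then show ?thesis using True a
    by (smt (verit, best) mult_le_cancel_right1 mult_nonneg_nonneg)
next
  case False
  hence pos: "u > 0" "v > 0" using assms by auto
  have c: "convex_on {0<..} (\<lambda>x::real. x powr p)" using assms powr_convex by auto
  have "((1 - (1 - l)) *\<^sub>R (u / l) + (1 - l) *\<^sub>R (v / (1 - l))) powr p \<le> (1 - (1 - l)) * (u / l) powr p + (1 - l) * (v/(1-l)) powr p"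
    using convex_onD[OF c, of "1 - l" "u/l" "v/(1-l)"] pos assms by auto
  moreover have "(1 - (1 - l)) *\<^sub>R (u / l) + (1 - l) *\<^sub>R (v / (1 - l)) = u + v" using assms by auto
  moreover have "l * (u / l) powr p = l powr (1 - p) * u powr p"
    using assms by (simp add: powr_divide powr_diff)
  moreover have "(1 - l) * (v / (1 - l)) powr p = (1 - l) powr (1 - p) * v powr p"
    using assms by (simp add: powr_divide powr_diff)
  ultimately show ?thesis by simp
qed



lemma weights_eq:
  fixes a b p :: real
  assumes "a > 0" "b > 0"
  shows "(a/(a+b)) powr (1-p) * a powr p + (b/(a+b)) powr (1-p) * b powr p = (a+b) powr p"
proof -
  have "\<And>c. c > 0 \<Longrightarrow> (c/(a+b)) powr (1-p) * c powr p = c * (a+b) powr p / (a+b)"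
  proof -
    fix c :: real assume c: "c > 0"
    have "(c/(a+b)) powr (1-p) * c powr p = (c powr (1-p) * c powr p) / (a+b) powr (1-p)"
      by (simp add: powr_divide)
    also have "c powr (1-p) * c powr p = c" using c by (simp add: powr_add[symmetric])
    also have "(a+b) powr (1-p) = (a+b) / (a+b) powr p" using assms by (simp add: powr_diff)
    finally show "(c/(a+b)) powr (1-p) * c powr p = c * (a+b) powr p / (a+b)" using assms by simp
  qed
  then have "(a/(a+b)) powr (1-p) * a powr p + (b/(a+b)) powr (1-p) * b powr p
     = a * (a+b) powr p / (a+b) + b * (a+b) powr p / (a+b)" using assms by simp
  also have "\<dots> = (a+b) * (a+b) powr p / (a+b)" by (simp add: add_divide_distrib[symmetric] distrib_right)
  also have "\<dots> = (a+b) powr p" using assms by simp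
  finally show ?thesis .
qed

lemma AE_zero_of_int0:
  fixes f :: "'a \<Rightarrow> real"
  assumes "f \<in> borel_measurable M" "\<And>x. f x \<ge> 0" "p > 0"
    and "(\<integral>\<^sup>+x. ennreal (f x powr p) \<partial>M) \<le> 0"
  shows "AE x in M. f x = 0"
proof -
  have "(\<integral>\<^sup>+x. ennreal (f x powr p) \<partial>M) = 0" using assms(4) by simp
  hence "AE x in M. ennreal (f x powr p) = 0" using assms by (subst (asm) nn_integral_0_iff_AE) auto
  thus ?thesis by eventually_elim (use assms in auto)
qed

lemma mink_int:
  fixes f g :: "'a \<Rightarrow> real" and p a b :: real
  assumes fm: "f \<in> borel_measurable M" and gm: "g \<in> borel_measurable M"
    and f0: "\<And>x. f x \<ge> 0" and g0: "\<And>x. g x \<ge> 0" and p: "p \<ge> 1" and "a \<ge> 0" "b \<ge> 0"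
    and fi: "(\<integral>\<^sup>+x. ennreal (f x powr p) \<partial>M) \<le> ennreal (a powr p)"
    and gi: "(\<integral>\<^sup>+x. ennreal (g x powr p) \<partial>M) \<le> ennreal (b powr p)"
  shows "(\<integral>\<^sup>+x. ennreal ((f x + g x) powr p) \<partial>M) \<le> ennreal ((a + b) powr p)"
proof (cases "a = 0 \<or> b = 0")
  case True
  then show ?thesis
  proof
    assume a: "a = 0"
    have "AE x in M. f x = 0" using AE_zero_of_int0[OF fm f0, of p] fi a p by auto
    hence "(\<integral>\<^sup>+x. ennreal ((f x + g x) powr p) \<partial>M) = (\<integral>\<^sup>+x. ennreal (g x powr p) \<partial>M)"
      by (intro nn_integral_cong_AE) auto
    thus ?thesis using gi a by simp
  next
    assume b: "b = 0"
    have "AE x in M. g x = 0" using AE_zero_of_int0[OF gm g0, of p] gi b p by auto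
    hence "(\<integral>\<^sup>+x. ennreal ((f x + g x) powr p) \<partial>M) = (\<integral>\<^sup>+x. ennreal (f x powr p) \<partial>M)"
      by (intro nn_integral_cong_AE) auto
    thus ?thesis using fi b by simp
  qed
next
  case False
  hence ab: "a > 0" "b > 0" using assms by auto
  define l where "l = a / (a+b)"
  have l: "0 < l" "l < 1" "1 - l = b/(a+b)" using ab by (auto simp: l_def field_simps)
  have "(\<integral>\<^sup>+x. ennreal ((f x + g x) powr p) \<partial>M)
      \<le> (\<integral>\<^sup>+x. ennreal (l powr (1-p)) * ennreal (f x powr p) + ennreal ((1-l) powr (1-p)) * ennreal (g x powr p) \<partial>M)"
    using convex_pow_split[OF f0 g0 l(1,2) p]
    by (intro nn_integral_mono) (simp add: ennreal_mult[symmetric] ennreal_plus[symmetric] del: ennreal_plus)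
  also have "\<dots> = ennreal (l powr (1-p)) * (\<integral>\<^sup>+x. ennreal (f x powr p) \<partial>M) + ennreal ((1-l) powr (1-p)) * (\<integral>\<^sup>+x. ennreal (g x powr p) \<partial>M)"
    using fm gm by (simp add: nn_integral_add nn_integral_cmult)
  also have "\<dots> \<le> ennreal (l powr (1-p)) * ennreal (a powr p) + ennreal ((1-l) powr (1-p)) * ennreal (b powr p)"
    by (intro add_mono mult_left_mono fi gi) auto
  also have "\<dots> = ennreal (l powr (1-p) * a powr p + (1-l) powr (1-p) * b powr p)"
    by (simp add: ennreal_mult[symmetric] ennreal_plus[symmetric] del: ennreal_plus)
  also have "\<dots> = ennreal ((a+b) powr p)" using weights_eq[OF ab, of p] l by (simp add: l_def)
  finally show ?thesis .
qed



lemma lpnorm_le: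
  assumes "p > 0" "C \<ge> 0" "(\<integral>\<^sup>+x. ennreal (\<bar>Y x\<bar> powr p) \<partial>M) \<le> ennreal (C powr p)"
  shows "lpnorm M p Y \<le> ennreal C"
proof -
  define I where "I = (\<integral>\<^sup>+x. ennreal (\<bar>Y x\<bar> powr p) \<partial>M)"
  have "I < \<top>" unfolding I_def using assms(3) ennreal_less_top by (rule le_less_trans)
  hence It: "I \<noteq> \<infinity>" by simp
  have "enn2real I \<le> C powr p" using assms(3) unfolding I_def by (intro enn2real_leI) auto
  hence "enn2real I powr (1/p) \<le> (C powr p) powr (1/p)" using assms(1) by (intro powr_mono2) auto
  also have "\<dots> = C" using assms by (simp add: powr_powr)
  finally show ?thesis using It unfolding lpnorm_def I_def[symmetric] Let_def by (simp add: ennreal_leI)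
qed

lemma lpnorm_eq:
  assumes "q > 0" "lpnorm M q Y \<noteq> \<infinity>"
  shows "(\<integral>\<^sup>+x. ennreal (\<bar>Y x\<bar> powr q) \<partial>M) = ennreal (enn2real (lpnorm M q Y) powr q)"
proof -
  define I where "I = (\<integral>\<^sup>+x. ennreal (\<bar>Y x\<bar> powr q) \<partial>M)"
  have It: "I \<noteq> \<infinity>" using assms(2) unfolding lpnorm_def I_def[symmetric] Let_def by auto
  have "lpnorm M q Y = ennreal (enn2real I powr (1/q))" using It unfolding lpnorm_def I_def[symmetric] Let_def by simp
  hence "enn2real (lpnorm M q Y) powr q = (enn2real I powr (1/q)) powr q" by simp
  also have "\<dots> = enn2real I" using assms by (simp add: powr_powr)
  finally show ?thesis using It unfolding I_def[symmetric] by (simp add: less_top)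
qed

lemma ratio_moment:
  fixes D :: "'a \<Rightarrow> real"
  assumes "q > 0" "D \<in> borel_measurable M"
  shows "(\<integral>\<^sup>+x. ennreal ((\<bar>D x\<bar> / enn2real (lpnorm M q D)) powr q) \<partial>M) \<le> 1"
proof (cases "lpnorm M q D = \<infinity> \<or> enn2real (lpnorm M q D) = 0")
  case True
  hence "enn2real (lpnorm M q D) = 0" by auto
  then show ?thesis by simp
next
  case False
  define a where "a = enn2real (lpnorm M q D)"
  have a: "a > 0" using False unfolding a_def by (simp add: less_le)
  have "(\<integral>\<^sup>+x. ennreal ((\<bar>D x\<bar> / a) powr q) \<partial>M) = (\<integral>\<^sup>+x. ennreal (\<bar>D x\<bar> powr q) * ennreal (1 / a powr q) \<partial>M)"
    by (intro nn_integral_cong) (simp add: powr_divide ennreal_mult[symmetric])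
  also have "\<dots> = (\<integral>\<^sup>+x. ennreal (\<bar>D x\<bar> powr q) \<partial>M) * ennreal (1 / a powr q)"
    using assms by (simp add: nn_integral_multc)
  also have "\<dots> = ennreal (a powr q) * ennreal (1 / a powr q)"
    using lpnorm_eq[of q M D] assms False unfolding a_def by simp
  also have "\<dots> = 1" using a by (simp add: ennreal_mult[symmetric])
  finally show ?thesis unfolding a_def by simp
qed

lemma threshold:
  fixes z p q d :: real
  assumes "z \<ge> 0" "0 < p" "p \<le> q" "d > 0"
  shows "z powr p \<le> d powr p + d powr (p - q) * z powr q"
proof (cases "z \<le> d")
  case True
  hence "z powr p \<le> d powr p" using assms by (intro powr_mono2) auto
  moreover have "d powr (p - q) * z powr q \<ge> 0" by simp
  ultimately show ?thesis by linarith
next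
  case False
  hence "z powr p = z powr q * z powr (p - q)" using assms by (simp add: powr_add[symmetric])
  also have "\<dots> \<le> z powr q * d powr (p - q)"
    using False assms by (intro mult_left_mono powr_mono2') auto
  finally show ?thesis by (simp add: mult.commute add_increasing)
qed

lemma nat_pow_ge: "k0 \<le> k \<Longrightarrow> 2^k0 + (k - k0) \<le> (2::nat)^k"
proof (induction k rule: dec_induct)
  case base then show ?case by simp
next
  case (step n)
  have "(1::nat) \<le> 2^n" by simp
  have "2^k0 + (Suc n - k0) = Suc (2^k0 + (n - k0))" using step by (simp add: Suc_diff_le)
  also have "\<dots> \<le> 2^n + 2^n" using step.IH \<open>1 \<le> 2^n\<close> by linarith
  also have "\<dots> = 2^Suc n" by simp
  finally show ?case .
qed

lemma geom_sum: "k0 \<le> n \<Longrightarrow> (\<Sum>k\<in>{k0+1..n}. (1/2::real)^(k-k0)) = 1 - (1/2)^(n-k0)"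
proof (induction n rule: dec_induct)
  case base then show ?case by simp
next
  case (step n)
  have "{k0+1..Suc n} = insert (Suc n) {k0+1..n}" using step by auto
  hence "(\<Sum>k\<in>{k0+1..Suc n}. (1/2::real)^(k-k0)) = (1/2)^(Suc n - k0) + (\<Sum>k\<in>{k0+1..n}. (1/2::real)^(k-k0))"
    by simp
  also have "\<dots> = 1 - (1/2)^(Suc n - k0)" using step by (simp add: Suc_diff_le)
  finally show ?case .
qed

lemma sum_two_powr_le:
  fixes p :: real
  assumes "p \<le> 2^k0"
  shows "(\<Sum>k\<in>{k0+1..k1}. 2 powr (p - 2^k)) \<le> 1"
proof -
  have "(\<Sum>k\<in>{k0+1..k1}. 2 powr (p - 2^k)) \<le> (\<Sum>k\<in>{k0+1..k1}. (1/2::real)^(k-k0))"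
  proof (intro sum_mono)
    fix k assume k: "k \<in> {k0+1..k1}"
    have "2^k0 + (k - k0) \<le> (2::nat)^k" using k nat_pow_ge[of k0 k] by auto
    hence "real (2^k0 + (k - k0)) \<le> real (2^k)" by linarith
    hence "p - 2^k \<le> - real (k - k0)" using assms by simp
    hence "2 powr (p - 2^k) \<le> 2 powr (- real (k - k0))" by (intro powr_mono) auto
    also have "\<dots> = (1/2)^(k-k0)" by (simp add: powr_minus powr_realpow power_one_over inverse_eq_divide)
    finally show "2 powr (p - 2^k) \<le> (1/2)^(k-k0)" .
  qed
  also have "\<dots> \<le> 1"
  proof (cases "k0 \<le> k1")
    case True thus ?thesis using geom_sum[OF True] by simp
  next
    case False thus ?thesis by simp
  qed
  finally show ?thesis .
qed

lemma three_powr: fixes p :: real assumes "p \<ge> 1" shows "2 powr p + 1 \<le> 3 powr p"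
proof -
  have "3 powr p = 3 * 3 powr (p - 1)" by (simp add: powr_diff)
  also have "3 powr (p-1) \<ge> 2 powr (p-1)" using assms by (intro powr_mono2) auto
  hence "3 * 3 powr (p - 1) \<ge> 2 * 2 powr (p-1) + 2 powr (p-1)" by simp
  moreover have "2 powr (p-1) \<ge> 1" using assms by (intro ge_one_powr_ge_zero) auto
  moreover have "2 * 2 powr (p-1) = 2 powr p" by (simp add: powr_diff)
  ultimately show ?thesis by linarith
qed

lemma telescope:
  fixes f :: "nat \<Rightarrow> real"
  shows "k0 \<le> n \<Longrightarrow> f n = f k0 + (\<Sum>k\<in>{k0+1..n}. f k - f (k - 1))"
proof (induction n rule: dec_induct)
  case base then show ?case by simp
next
  case (step n)
  have "{k0+1..Suc n} = insert (Suc n) {k0+1..n}" using step by auto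
  hence "(\<Sum>k\<in>{k0+1..Suc n}. f k - f (k - 1)) = (f (Suc n) - f n) + (\<Sum>k\<in>{k0+1..n}. f k - f (k - 1))"
    by simp
  then show ?case using step.IH by linarith
qed



theorem proposition6p1:
  fixes M :: "'a measure" and X :: "'i \<Rightarrow> 'a \<Rightarrow> real"
    and T :: "'i set" and Ts :: "nat \<Rightarrow> 'i set" and \<pi> :: "nat \<Rightarrow> 'i \<Rightarrow> 'i"
    and k1 k0 :: nat and p :: real
  assumes "prob_space M"
    and meas: "\<And>t. t \<in> T \<Longrightarrow> X t \<in> borel_measurable M"
    and "finite T" and "T \<noteq> {}"
    and "k1 \<ge> 2"
    and "\<And>k. k \<le> k1 \<Longrightarrow> Ts k \<subseteq> T"
    and "\<And>k. k \<le> k1 \<Longrightarrow> real (card (Ts k)) \<le> exp (2 ^ (k + 1))"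
    and "Ts k1 = T"
    and "\<And>k t. k \<le> k1 \<Longrightarrow> t \<in> T \<Longrightarrow> \<pi> k t \<in> Ts k"
    and "\<And>t. t \<in> T \<Longrightarrow> \<pi> k1 t = t"
    and "1 \<le> k0" and "k0 \<le> k1 - 1"
    and "2 ^ (k0 - 1) \<le> p" and "p \<le> 2 ^ k0"
  shows "lpnorm M p (\<lambda>\<omega>. Max ((\<lambda>t. \<bar>X t \<omega>\<bar>) ` T))
         \<le> ennreal (3 * exp 3) *
           ((SUP t\<in>T. \<Sum>k\<in>{k0+1..k1}. lpnorm M (2 ^ k) (\<lambda>\<omega>. X (\<pi> k t) \<omega> - X (\<pi> (k - 1) t) \<omega>))
            + (SUP t\<in>Ts k0. lpnorm M p (X t)))"
proof -
  note finT = \<open>finite T\<close>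
  note Tsub = \<open>\<And>k. k \<le> k1 \<Longrightarrow> Ts k \<subseteq> T\<close>
  note card = \<open>\<And>k. k \<le> k1 \<Longrightarrow> real (card (Ts k)) \<le> exp (2 ^ (k + 1))\<close>
  note pimap = \<open>\<And>k t. k \<le> k1 \<Longrightarrow> t \<in> T \<Longrightarrow> \<pi> k t \<in> Ts k\<close>
  note pik1 = \<open>\<And>t. t \<in> T \<Longrightarrow> \<pi> k1 t = t\<close>
  note k0 = \<open>1 \<le> k0\<close> \<open>k0 \<le> k1 - 1\<close> \<open>k1 \<ge> 2\<close>
  note pb = \<open>2 ^ (k0 - 1) \<le> p\<close> \<open>p \<le> 2 ^ k0\<close>
  have p1: "p \<ge> 1" using pb(1) by (smt (verit) one_le_power)
  have p0: "p > 0" using p1 by simp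
  obtain t0 where t0: "t0 \<in> T" using \<open>T \<noteq> {}\<close> by blast
  have Tsne: "Ts k \<noteq> {}" if "k \<le> k1" for k using pimap[OF that t0] by auto
  have Tsfin: "finite (Ts k)" if "k \<le> k1" for k using Tsub[OF that] finT finite_subset by blast
  have Tsmeas: "X s \<in> borel_measurable M" if "k \<le> k1" "s \<in> Ts k" for k s
    using meas Tsub that by blast
  define K where "K = {k0+1..k1}"
  have Kfin: "finite K" and Kne: "K \<noteq> {}" using k0 by (auto simp: K_def)
  define L where "L k t = lpnorm M (2^k) (\<lambda>\<omega>. X (\<pi> k t) \<omega> - X (\<pi> (k - 1) t) \<omega>)" for k t
  define S0 where "S0 = (SUP t\<in>T. \<Sum>k\<in>K. L k t)"
  define S1 where "S1 = (SUP s\<in>Ts k0. lpnorm M p (X s))"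
  define F where "F \<omega> = Max ((\<lambda>t. \<bar>X t \<omega>\<bar>) ` T)" for \<omega>
  have goal: "lpnorm M p F \<le> ennreal (3 * exp 3) * (S0 + S1)"
  proof (cases "ennreal (3 * exp 3) * (S0 + S1) = \<top>")
    case True then show ?thesis by simp
  next
    case False
    have "S0 + S1 \<noteq> \<top>" using False by (auto simp: ennreal_mult_eq_top_iff)
    hence S0f: "S0 \<noteq> \<top>" and S1f: "S1 \<noteq> \<top>" by auto
    have Lf: "L k t \<noteq> \<top>" if "k \<in> K" "t \<in> T" for k t
    proof -
      have "L k t \<le> (\<Sum>k\<in>K. L k t)" using that Kfin by (intro member_le_sum) auto
      also have "\<dots> \<le> S0" unfolding S0_def using that by (intro SUP_upper) auto
      finally show ?thesis using S0f neq_top_trans by blast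
    qed
    have mf: "lpnorm M p (X s) \<noteq> \<top>" if "s \<in> Ts k0" for s
    proof -
      have "lpnorm M p (X s) \<le> S1" unfolding S1_def using that by (intro SUP_upper) auto
      thus ?thesis using S1f neq_top_trans by blast
    qed
    define a where "a k t = enn2real (L k t)" for k t
    define m where "m s = enn2real (lpnorm M p (X s))" for s
    define A where "A = Max ((\<lambda>t. \<Sum>k\<in>K. a k t) ` T)"
    define M0 where "M0 = Max (m ` Ts k0)"
    have a0: "a k t \<ge> 0" for k t by (simp add: a_def)
    have m0: "m s \<ge> 0" for s by (simp add: m_def)
    have k0k1: "k0 \<le> k1" using k0 by simp
    have "A \<in> (\<lambda>t. \<Sum>k\<in>K. a k t) ` T"
      using Max_in[of "(\<lambda>t. \<Sum>k\<in>K. a k t) ` T"] finT \<open>T \<noteq> {}\<close> unfolding A_def by auto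
    then obtain tA where tA: "tA \<in> T" "A = (\<Sum>k\<in>K. a k tA)" by blast
    have "M0 \<in> m ` Ts k0"
      using Max_in[of "m ` Ts k0"] Tsfin[OF k0k1] Tsne[OF k0k1] unfolding M0_def by auto
    then obtain sM where sM: "sM \<in> Ts k0" "M0 = m sM" by blast
    have A0: "A \<ge> 0" using tA a0 by (simp add: sum_nonneg)
    have M00: "M0 \<ge> 0" using sM m0 by simp
    have Ale: "(\<Sum>k\<in>K. a k t) \<le> A" if "t \<in> T" for t
      unfolding A_def using finT that by (intro Max_ge) auto
    have mle: "m s \<le> M0" if "s \<in> Ts k0" for s
      unfolding M0_def using Tsfin[OF k0k1] that by (intro Max_ge) auto
    have AS: "ennreal A \<le> S0"
    proof -
      have "ennreal A = (\<Sum>k\<in>K. ennreal (a k tA))" using tA a0 by (simp add: sum_ennreal)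
      also have "\<dots> = (\<Sum>k\<in>K. L k tA)" using Lf tA(1) by (intro sum.cong) (auto simp: a_def less_top)
      also have "\<dots> \<le> S0" unfolding S0_def using tA by (intro SUP_upper) auto
      finally show ?thesis .
    qed
    have MS: "ennreal M0 \<le> S1"
    proof -
      have "ennreal M0 = lpnorm M p (X sM)" using sM mf by (simp add: m_def less_top)
      also have "\<dots> \<le> S1" unfolding S1_def using sM by (intro SUP_upper) auto
      finally show ?thesis .
    qed
    have main: "lpnorm M p F \<le> ennreal (3 * exp 3 * (M0 + A))"
    proof -
      define U where "U \<omega> = Max ((\<lambda>s. \<bar>X s \<omega>\<bar>) ` Ts k0)" for \<omega>
      define I where "I = Sigma K (\<lambda>k. Ts k \<times> Ts (k - 1))"
      define R where "R i \<omega> = \<bar>X (fst (snd i)) \<omega> - X (snd (snd i)) \<omega>\<bar> /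
           enn2real (lpnorm M (2 ^ fst i) (\<lambda>\<omega>. X (fst (snd i)) \<omega> - X (snd (snd i)) \<omega>))" for i \<omega>
      define Z where "Z \<omega> = Max ((\<lambda>i. R i \<omega>) ` I)" for \<omega>
      have Kk: "k \<le> k1" "k - 1 \<le> k1" "k0 + 1 \<le> k" if "k \<in> K" for k using that by (auto simp: K_def)
      have Ifin: "finite I" unfolding I_def using Kfin Tsfin Kk by (auto intro!: finite_SigmaI)
      have Ine: "I \<noteq> {}"
      proof -
        have "k0+1 \<in> K" using k0 by (auto simp: K_def)
        moreover have "\<pi> (k0+1) t0 \<in> Ts (k0+1)" "\<pi> k0 t0 \<in> Ts (k0 + 1 - 1)"
          using pimap[OF _ t0] k0 by auto
        ultimately have "(k0+1, (\<pi> (k0+1) t0, \<pi> k0 t0)) \<in> I" unfolding I_def by blast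
        thus ?thesis by blast
      qed
      have Imeas: "X (fst (snd i)) \<in> borel_measurable M" "X (snd (snd i)) \<in> borel_measurable M" if "i \<in> I" for i
        using that Tsmeas Kk unfolding I_def by auto
      have R0: "R i \<omega> \<ge> 0" for i \<omega> by (simp add: R_def)
      have Rmeas: "R i \<in> borel_measurable M" if "i \<in> I" for i
        unfolding R_def using Imeas[OF that] by measurable
      have Zmeas: "Z \<in> borel_measurable M" unfolding Z_def using Ifin Rmeas by measurable
      have Umeas: "U \<in> borel_measurable M" unfolding U_def using Tsfin[OF k0k1] Tsmeas[OF k0k1] by measurable
      have Z0: "Z \<omega> \<ge> 0" for \<omega>
      proof -
        obtain i where "i \<in> I" using Ine by blast
        hence "R i \<omega> \<le> Z \<omega>" unfolding Z_def using Ifin by (intro Max_ge) auto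
        thus ?thesis using R0[of i \<omega>] by linarith
      qed
      have U0: "U \<omega> \<ge> 0" for \<omega>
      proof -
        obtain s where "s \<in> Ts k0" using Tsne[OF k0k1] by blast
        hence "\<bar>X s \<omega>\<bar> \<le> U \<omega>" unfolding U_def using Tsfin[OF k0k1] by (intro Max_ge) auto
        thus ?thesis by linarith
      qed
      have pw: "AE \<omega> in M. F \<omega> \<le> U \<omega> + A * Z \<omega>"
      proof -
        have "AE \<omega> in M. \<forall>k\<in>K. \<forall>t\<in>T. a k t = 0 \<longrightarrow> \<bar>X (\<pi> k t) \<omega> - X (\<pi> (k - 1) t) \<omega>\<bar> = 0"
        proof (intro AE_finite_allI Kfin finT)
          fix k t assume kt: "k \<in> K" "t \<in> T"
          show "AE \<omega> in M. a k t = 0 \<longrightarrow> \<bar>X (\<pi> k t) \<omega> - X (\<pi> (k - 1) t) \<omega>\<bar> = 0"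
          proof (cases "a k t = 0")
            case True
            have q0: "(2::real)^k > 0" by simp
            have ms: "(\<lambda>\<omega>. X (\<pi> k t) \<omega> - X (\<pi> (k - 1) t) \<omega>) \<in> borel_measurable M"
              using Tsmeas pimap Kk[OF kt(1)] kt(2) by (intro borel_measurable_diff) blast+
            have "(\<integral>\<^sup>+\<omega>. ennreal (\<bar>X (\<pi> k t) \<omega> - X (\<pi> (k - 1) t) \<omega>\<bar> powr (2^k)) \<partial>M) = ennreal (a k t powr (2^k))"
              using lpnorm_eq[OF q0, of M "\<lambda>\<omega>. X (\<pi> k t) \<omega> - X (\<pi> (k - 1) t) \<omega>"] Lf[OF kt]
              unfolding a_def L_def by simp
            also have "\<dots> = 0" using True by simp
            finally have "AE \<omega> in M. \<bar>X (\<pi> k t) \<omega> - X (\<pi> (k - 1) t) \<omega>\<bar> = 0"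
              using ms by (intro AE_zero_of_int0[where p="2^k"]) auto
            thus ?thesis by auto
          qed simp
        qed
        thus ?thesis
        proof eventually_elim
          case (elim \<omega>)
          have "\<bar>X t \<omega>\<bar> \<le> U \<omega> + A * Z \<omega>" if t: "t \<in> T" for t
          proof -
            have "X t \<omega> = X (\<pi> k1 t) \<omega>" using pik1 t by simp
            also have "\<dots> = X (\<pi> k0 t) \<omega> + (\<Sum>k\<in>K. X (\<pi> k t) \<omega> - X (\<pi> (k - 1) t) \<omega>)"
              unfolding K_def using telescope[of k0 k1 "\<lambda>k. X (\<pi> k t) \<omega>"] k0k1 by simp
            finally have eqX: "X t \<omega> = X (\<pi> k0 t) \<omega> + (\<Sum>k\<in>K. X (\<pi> k t) \<omega> - X (\<pi> (k - 1) t) \<omega>)" .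
            have sa: "\<bar>\<Sum>k\<in>K. X (\<pi> k t) \<omega> - X (\<pi> (k - 1) t) \<omega>\<bar> \<le> (\<Sum>k\<in>K. \<bar>X (\<pi> k t) \<omega> - X (\<pi> (k - 1) t) \<omega>\<bar>)"
              by (rule sum_abs)
            have "\<bar>X t \<omega>\<bar> \<le> \<bar>X (\<pi> k0 t) \<omega>\<bar> + \<bar>\<Sum>k\<in>K. X (\<pi> k t) \<omega> - X (\<pi> (k - 1) t) \<omega>\<bar>"
              unfolding eqX by (rule abs_triangle_ineq)
            hence "\<bar>X t \<omega>\<bar> \<le> \<bar>X (\<pi> k0 t) \<omega>\<bar> + (\<Sum>k\<in>K. \<bar>X (\<pi> k t) \<omega> - X (\<pi> (k - 1) t) \<omega>\<bar>)"
              using sa by linarith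
            also have "\<bar>X (\<pi> k0 t) \<omega>\<bar> \<le> U \<omega>"
              unfolding U_def using Tsfin[OF k0k1] pimap[OF k0k1 t] by (intro Max_ge) auto
            also have "(\<Sum>k\<in>K. \<bar>X (\<pi> k t) \<omega> - X (\<pi> (k - 1) t) \<omega>\<bar>) \<le> (\<Sum>k\<in>K. a k t * Z \<omega>)"
            proof (intro sum_mono)
              fix k assume k: "k \<in> K"
              have iI: "(k, (\<pi> k t, \<pi> (k - 1) t)) \<in> I" unfolding I_def using k Kk[OF k] pimap t by auto
              have Req: "R (k, (\<pi> k t, \<pi> (k - 1) t)) \<omega> = \<bar>X (\<pi> k t) \<omega> - X (\<pi> (k - 1) t) \<omega>\<bar> / a k t"
                by (simp add: R_def a_def L_def)
              have RZ: "R (k, (\<pi> k t, \<pi> (k - 1) t)) \<omega> \<le> Z \<omega>"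
                unfolding Z_def using Ifin iI by (intro Max_ge) auto
              show "\<bar>X (\<pi> k t) \<omega> - X (\<pi> (k - 1) t) \<omega>\<bar> \<le> a k t * Z \<omega>"
              proof (cases "a k t = 0")
                case True thus ?thesis using elim k t by simp
              next
                case False
                hence "a k t > 0" using a0[of k t] by simp
                hence "\<bar>X (\<pi> k t) \<omega> - X (\<pi> (k - 1) t) \<omega>\<bar> = a k t * R (k, (\<pi> k t, \<pi> (k - 1) t)) \<omega>"
                  using Req by simp
                also have "\<dots> \<le> a k t * Z \<omega>" using RZ a0 by (intro mult_left_mono) auto
                finally show ?thesis .
              qed
            qed
            also have "(\<Sum>k\<in>K. a k t * Z \<omega>) = (\<Sum>k\<in>K. a k t) * Z \<omega>" by (simp add: sum_distrib_right)
            also have "\<dots> \<le> A * Z \<omega>" using Ale[OF t] Z0 by (intro mult_right_mono) auto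
            finally show ?thesis by simp
          qed
          thus ?case unfolding F_def using finT \<open>T \<noteq> {}\<close> by (subst Max_le_iff) auto
        qed
      qed
      have E1: "(\<integral>\<^sup>+\<omega>. ennreal (U \<omega> powr p) \<partial>M) \<le> ennreal ((3 * exp 3 * M0) powr p)"
      proof -
        have "(\<integral>\<^sup>+\<omega>. ennreal (U \<omega> powr p) \<partial>M) \<le> (\<integral>\<^sup>+\<omega>. (\<Sum>s\<in>Ts k0. ennreal (\<bar>X s \<omega>\<bar> powr p)) \<partial>M)"
        proof (intro nn_integral_mono)
          fix \<omega>
          have "U \<omega> \<in> (\<lambda>s. \<bar>X s \<omega>\<bar>) ` Ts k0" unfolding U_def
            using Max_in Tsfin[OF k0k1] Tsne[OF k0k1] by auto
          then obtain s where s: "s \<in> Ts k0" "U \<omega> = \<bar>X s \<omega>\<bar>" by blast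
          have "U \<omega> powr p \<le> (\<Sum>s\<in>Ts k0. \<bar>X s \<omega>\<bar> powr p)"
            using s Tsfin[OF k0k1] by (auto intro: member_le_sum)
          thus "ennreal (U \<omega> powr p) \<le> (\<Sum>s\<in>Ts k0. ennreal (\<bar>X s \<omega>\<bar> powr p))"
            by (simp add: ennreal_leI)
        qed
        also have "\<dots> = (\<Sum>s\<in>Ts k0. \<integral>\<^sup>+\<omega>. ennreal (\<bar>X s \<omega>\<bar> powr p) \<partial>M)"
          using Tsmeas[OF k0k1] by (intro nn_integral_sum) auto
        also have "\<dots> = (\<Sum>s\<in>Ts k0. ennreal (m s powr p))"
          using lpnorm_eq[OF p0] mf by (intro sum.cong) (auto simp: m_def)
        also have "\<dots> \<le> (\<Sum>s\<in>Ts k0. ennreal (M0 powr p))"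
          using mle m0 p0 by (intro sum_mono ennreal_leI powr_mono2) auto
        also have "\<dots> = ennreal (real (card (Ts k0)) * M0 powr p)" by (simp add: ennreal_mult ennreal_of_nat_eq_real_of_nat)
        also have "\<dots> \<le> ennreal ((3 * exp 3 * M0) powr p)"
        proof (intro ennreal_leI)
          have "(2::real)^(k0+1) = 4 * 2^(k0-1)" using k0 by (cases k0) auto
          hence "(2::real)^(k0+1) \<le> 4 * p" using pb by simp
          hence "real (card (Ts k0)) \<le> exp (4 * p)" using card[OF k0k1] by (meson exp_le_cancel_iff order_trans)
          also have "\<dots> = exp 4 powr p" by (simp add: powr_def mult.commute)
          also have "\<dots> \<le> (3 * exp 3) powr p"
          proof -
            have "exp (4::real) = exp 1 * exp 3" by (simp add: exp_add[symmetric])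
            also have "\<dots> \<le> 3 * exp 3" using exp_le by simp
            finally show ?thesis using p0 by (intro powr_mono2) auto
          qed
          finally have "real (card (Ts k0)) * M0 powr p \<le> (3 * exp 3) powr p * M0 powr p"
            by (intro mult_right_mono) auto
          thus "real (card (Ts k0)) * M0 powr p \<le> (3 * exp 3 * M0) powr p" by (simp add: powr_mult)
        qed
        finally show ?thesis .
      qed
      have E3: "(\<integral>\<^sup>+\<omega>. ennreal (Z \<omega> powr p) \<partial>M) \<le> ennreal ((3 * exp 3) powr p)"
      proof -
        define d where "d = 2 * exp (3::real)"
        define q where "q i = (2::real) ^ fst i" for i :: "nat \<times> 'i \<times> 'i"
        have d0: "d > 0" by (simp add: d_def)
        have qp: "p \<le> q i" if "i \<in> I" for i
        proof -
          have "k0 + 1 \<le> fst i" using that Kk unfolding I_def by auto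
          hence "(2::real)^k0 \<le> 2^fst i" by (intro power_increasing) auto
          thus ?thesis using pb unfolding q_def by linarith
        qed
        have cI: "d powr (p - q i) \<ge> 0" for i by simp
        have "(\<integral>\<^sup>+\<omega>. ennreal (Z \<omega> powr p) \<partial>M) \<le>
            (\<integral>\<^sup>+\<omega>. ennreal (d powr p) + (\<Sum>i\<in>I. ennreal (d powr (p - q i)) * ennreal (R i \<omega> powr q i)) \<partial>M)"
        proof (intro nn_integral_mono)
          fix \<omega>
          have "Z \<omega> \<in> (\<lambda>i. R i \<omega>) ` I" unfolding Z_def using Max_in Ifin Ine by auto
          then obtain i0 where i0: "i0 \<in> I" "Z \<omega> = R i0 \<omega>" by blast
          have "Z \<omega> powr p \<le> d powr p + d powr (p - q i0) * R i0 \<omega> powr q i0"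
            unfolding i0(2) using threshold[OF R0 p0 qp[OF i0(1)] d0] .
          also have "d powr (p - q i0) * R i0 \<omega> powr q i0 \<le> (\<Sum>i\<in>I. d powr (p - q i) * R i \<omega> powr q i)"
            using i0 Ifin by (intro member_le_sum) auto
          finally have "Z \<omega> powr p \<le> d powr p + (\<Sum>i\<in>I. d powr (p - q i) * R i \<omega> powr q i)" by simp
          hence "ennreal (Z \<omega> powr p) \<le> ennreal (d powr p + (\<Sum>i\<in>I. d powr (p - q i) * R i \<omega> powr q i))"
            by (intro ennreal_leI)
          also have "\<dots> = ennreal (d powr p) + (\<Sum>i\<in>I. ennreal (d powr (p - q i)) * ennreal (R i \<omega> powr q i))"
            by (simp add: sum_nonneg ennreal_mult[symmetric])
          finally show "ennreal (Z \<omega> powr p) \<le> ennreal (d powr p) + (\<Sum>i\<in>I. ennreal (d powr (p - q i)) * ennreal (R i \<omega> powr q i))" .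
        qed
        also have "\<dots> = ennreal (d powr p) + (\<Sum>i\<in>I. ennreal (d powr (p - q i)) * (\<integral>\<^sup>+\<omega>. ennreal (R i \<omega> powr q i) \<partial>M))"
          using Rmeas Ifin
          by (simp add: nn_integral_add nn_integral_sum nn_integral_cmult prob_space.emeasure_space_1[OF \<open>prob_space M\<close>] sum_nonneg)
        also have "\<dots> \<le> ennreal (d powr p) + (\<Sum>i\<in>I. ennreal (d powr (p - q i)) * 1)"
        proof (intro add_left_mono sum_mono mult_left_mono)
          fix i assume i: "i \<in> I"
          show "(\<integral>\<^sup>+\<omega>. ennreal (R i \<omega> powr q i) \<partial>M) \<le> 1"
            unfolding R_def q_def
            using ratio_moment[of "2 ^ fst i" "\<lambda>\<omega>. X (fst (snd i)) \<omega> - X (snd (snd i)) \<omega>" M] Imeas[OF i]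
            by simp
        qed auto
        also have "\<dots> = ennreal (d powr p + (\<Sum>i\<in>I. d powr (p - q i)))" by (simp add: sum_nonneg)
        also have "\<dots> \<le> ennreal ((3 * exp 3) powr p)"
        proof (intro ennreal_leI)
          have dp: "d powr r = 2 powr r * exp (3 * r)" for r
          proof -
            have "d powr r = 2 powr r * exp 3 powr r" by (simp add: d_def powr_mult)
            also have "exp 3 powr r = exp (3 * r)" by (simp add: powr_def mult.commute)
            finally show ?thesis .
          qed
          have "(\<Sum>i\<in>I. d powr (p - q i)) = (\<Sum>k\<in>K. \<Sum>j\<in>Ts k \<times> Ts (k - 1). d powr (p - 2^k))"
            unfolding I_def q_def using Kfin Tsfin Kk
            by (subst sum.Sigma) (auto intro!: finite_cartesian_product simp: split_def)
          also have "\<dots> = (\<Sum>k\<in>K. real (card (Ts k \<times> Ts (k - 1))) * d powr (p - 2^k))" by simp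
          also have "\<dots> \<le> (\<Sum>k\<in>K. exp (3 * p) * 2 powr (p - 2^k))"
          proof (intro sum_mono)
            fix k assume k: "k \<in> K"
            have k1': "k - 1 + 1 = k" using Kk[OF k] by auto
            have "real (card (Ts k \<times> Ts (k - 1))) = real (card (Ts k)) * real (card (Ts (k - 1)))"
              by (simp add: card_cartesian_product)
            also have "\<dots> \<le> exp (2^(k+1)) * exp (2^k)"
              using card[of k] card[of "k - 1"] Kk[OF k] k1' by (intro mult_mono) auto
            also have "\<dots> = exp (3 * 2^k)" by (simp add: exp_add[symmetric])
            finally have c: "real (card (Ts k \<times> Ts (k - 1))) \<le> exp (3 * 2^k)" .
            have "real (card (Ts k \<times> Ts (k - 1))) * d powr (p - 2^k) \<le> exp (3 * 2^k) * d powr (p - 2^k)"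
              using c by (intro mult_right_mono) auto
            also have "\<dots> = exp (3 * p) * 2 powr (p - 2^k)"
              by (simp add: dp exp_add[symmetric] algebra_simps)
            finally show "real (card (Ts k \<times> Ts (k - 1))) * d powr (p - 2^k) \<le> exp (3 * p) * 2 powr (p - 2^k)" .
          qed
          also have "\<dots> = exp (3 * p) * (\<Sum>k\<in>K. 2 powr (p - 2^k))" by (simp add: sum_distrib_left)
          also have "\<dots> \<le> exp (3 * p) * 1"
            using sum_two_powr_le[OF pb(2), of k1] unfolding K_def by (intro mult_left_mono) auto
          finally have "d powr p + (\<Sum>i\<in>I. d powr (p - q i)) \<le> exp (3 * p) * (2 powr p + 1)"
            by (simp add: dp algebra_simps)
          also have "\<dots> \<le> exp (3 * p) * 3 powr p" using three_powr[OF p1] by (intro mult_left_mono) auto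
          also have "\<dots> = (3 * exp 3) powr p"
          proof -
            have "(3 * exp 3) powr p = 3 powr p * exp 3 powr p" by (simp add: powr_mult)
            also have "exp 3 powr p = exp (3 * p)" by (simp add: powr_def mult.commute)
            finally show ?thesis by simp
          qed
          finally show "d powr p + (\<Sum>i\<in>I. d powr (p - q i)) \<le> (3 * exp 3) powr p" .
        qed
        finally show ?thesis .
      qed
      have E2: "(\<integral>\<^sup>+\<omega>. ennreal ((A * Z \<omega>) powr p) \<partial>M) \<le> ennreal ((3 * exp 3 * A) powr p)"
      proof -
        have "(\<integral>\<^sup>+\<omega>. ennreal ((A * Z \<omega>) powr p) \<partial>M) = (\<integral>\<^sup>+\<omega>. ennreal (A powr p) * ennreal (Z \<omega> powr p) \<partial>M)"
          by (simp add: powr_mult ennreal_mult)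
        also have "\<dots> = ennreal (A powr p) * (\<integral>\<^sup>+\<omega>. ennreal (Z \<omega> powr p) \<partial>M)"
          using Zmeas by (simp add: nn_integral_cmult)
        also have "\<dots> \<le> ennreal (A powr p) * ennreal ((3 * exp 3) powr p)"
          by (intro mult_left_mono E3) auto
        also have "\<dots> = ennreal ((3 * exp 3 * A) powr p)"
          by (simp add: powr_mult ennreal_mult[symmetric] mult.commute)
        finally show ?thesis .
      qed
      have "(\<integral>\<^sup>+\<omega>. ennreal (\<bar>F \<omega>\<bar> powr p) \<partial>M) \<le> (\<integral>\<^sup>+\<omega>. ennreal ((U \<omega> + A * Z \<omega>) powr p) \<partial>M)"
      proof (intro nn_integral_mono_AE)
        show "AE \<omega> in M. ennreal (\<bar>F \<omega>\<bar> powr p) \<le> ennreal ((U \<omega> + A * Z \<omega>) powr p)"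
          using pw
        proof eventually_elim
          case (elim \<omega>)
          have "F \<omega> \<ge> 0"
          proof -
            have "\<bar>X t0 \<omega>\<bar> \<le> F \<omega>" unfolding F_def using finT t0 by (intro Max_ge) auto
            thus ?thesis by linarith
          qed
          thus ?case using elim p0 by (intro ennreal_leI powr_mono2) auto
        qed
      qed
      also have "\<dots> \<le> ennreal ((3 * exp 3 * M0 + 3 * exp 3 * A) powr p)"
        using Zmeas Umeas A0 M00 U0 Z0 E1 E2 p1
        by (intro mink_int) (auto intro: mult_nonneg_nonneg)
      also have "\<dots> = ennreal ((3 * exp 3 * (M0 + A)) powr p)" by (simp add: distrib_left)
      finally show ?thesis using p0 A0 M00 by (intro lpnorm_le) auto
    qed
    also have "\<dots> = ennreal (3 * exp 3) * (ennreal A + ennreal M0)"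
      using A0 M00 by (simp add: ennreal_mult ennreal_plus[symmetric] add.commute del: ennreal_plus)
    also have "\<dots> \<le> ennreal (3 * exp 3) * (S0 + S1)"
      by (intro mult_left_mono add_mono AS MS) auto
    finally show ?thesis .
  qed
  show ?thesis using goal unfolding F_def S0_def S1_def L_def K_def .
qed


end
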